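(* Let $(V_1, V_2)$ be a BCL pair on $\mathcal{H}$ such that $[V_2^*, V_1]$ is normal. Then \[ \operatorname{ran}[V_2^*, V_1] = \operatorname{ran}[V_1^*, V_2] \subseteq E_1, \] and $[V_2^*, V_1]|_{E_1^\perp} = [V_1^*, V_2]|_{E_1^\perp} = 0$.
   Context: All Hilbert spaces are complex and separable. An isometric pair is a pair $(V_1,V_2)$ of commuting isometries. An isometry $V$ is a shift if $V^{*m}\to0$ strongly. A BCL pair is an isometric pair with $V_1V_2$ a shift. $[V_2^*,V_1] := V_2^*V_1 - V_1V_2^*$ and $[V_1^*,V_2] := V_1^*V_2 - V_2V_1^*$. $C(V_1,V_2) := I - V_1V_1^* - V_2V_2^* + V_1V_2V_1^*V_2^*$ and $E_1 := \ker(C(V_1,V_2)-I)$. *)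

theory Defs
  imports "HOL-Analysis.Analysis"
begin

text \<open>The distribution has no complex inner product spaces, so we introduce a type class
of complex Hilbert spaces: a real Banach space with a compatible complex scalar
multiplication and a complex inner product (antilinear in the first, linear in the
second argument) inducing the norm, which is moreover separable.\<close>

class complex_hilbert = banach +
  fixes scaleC :: "complex \<Rightarrow> 'a \<Rightarrow> 'a" (infixr \<open>*\<^sub>C\<close> 75)
    and cinner :: "'a \<Rightarrow> 'a \<Rightarrow> complex"
  assumes scaleC_add_right: "a *\<^sub>C (x + y) = a *\<^sub>C x + a *\<^sub>C y"
    and scaleC_add_left: "(a + b) *\<^sub>C x = a *\<^sub>C x + b *\<^sub>C x"
    and scaleC_scaleC: "a *\<^sub>C (b *\<^sub>C x) = (a * b) *\<^sub>C x"
    and scaleC_one: "1 *\<^sub>C x = x"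
    and scaleR_scaleC: "scaleR r x = complex_of_real r *\<^sub>C x"
    and cinner_commute: "cinner x y = cnj (cinner y x)"
    and cinner_add_right: "cinner x (y + z) = cinner x y + cinner x z"
    and cinner_scaleC_right: "cinner x (a *\<^sub>C y) = a * cinner x y"
    and cinner_pos: "0 \<le> Re (cinner x x)"
    and cinner_eq_zero_iff: "cinner x x = 0 \<longleftrightarrow> x = 0"
    and norm_eq_sqrt_cinner: "norm x = sqrt (Re (cinner x x))"

class sep_complex_hilbert = complex_hilbert +
  assumes separable: "\<exists>f :: nat \<Rightarrow> 'a. \<forall>x e. 0 < e \<longrightarrow> (\<exists>n. norm (x - f n) < e)"

definition bounded_clinear_op :: "('a::sep_complex_hilbert \<Rightarrow> 'a) \<Rightarrow> bool" where
  "bounded_clinear_op T \<longleftrightarrow>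
     (\<forall>x y. T (x + y) = T x + T y) \<and> (\<forall>a x. T (a *\<^sub>C x) = a *\<^sub>C T x) \<and>
     (\<exists>K. \<forall>x. norm (T x) \<le> K * norm x)"

definition is_adjoint :: "('a::sep_complex_hilbert \<Rightarrow> 'a) \<Rightarrow> ('a \<Rightarrow> 'a) \<Rightarrow> bool" where
  "is_adjoint T S \<longleftrightarrow> (\<forall>x y. cinner (T x) y = cinner x (S y))"

definition isometry :: "('a::sep_complex_hilbert \<Rightarrow> 'a) \<Rightarrow> bool" where
  "isometry V \<longleftrightarrow> bounded_clinear_op V \<and> (\<forall>x. norm (V x) = norm x)"

definition isometric_pair :: "('a::sep_complex_hilbert \<Rightarrow> 'a) \<Rightarrow> ('a \<Rightarrow> 'a) \<Rightarrow> bool" where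
  "isometric_pair V1 V2 \<longleftrightarrow> isometry V1 \<and> isometry V2 \<and> V1 \<circ> V2 = V2 \<circ> V1"

definition is_shift :: "('a::sep_complex_hilbert \<Rightarrow> 'a) \<Rightarrow> bool" where
  "is_shift V \<longleftrightarrow> isometry V \<and>
     (\<exists>Vs. is_adjoint V Vs \<and> (\<forall>x. (\<lambda>m. (Vs ^^ m) x) \<longlonglongrightarrow> 0))"

definition BCL_pair :: "('a::sep_complex_hilbert \<Rightarrow> 'a) \<Rightarrow> ('a \<Rightarrow> 'a) \<Rightarrow> bool" where
  "BCL_pair V1 V2 \<longleftrightarrow> isometric_pair V1 V2 \<and> is_shift (V1 \<circ> V2)"

definition normal_op :: "('a::sep_complex_hilbert \<Rightarrow> 'a) \<Rightarrow> bool" where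
  "normal_op T \<longleftrightarrow> (\<exists>S. is_adjoint T S \<and> T \<circ> S = S \<circ> T)"

definition commutator :: "('a::sep_complex_hilbert \<Rightarrow> 'a) \<Rightarrow> ('a \<Rightarrow> 'a) \<Rightarrow> 'a \<Rightarrow> 'a" where
  "commutator A B = (\<lambda>x. A (B x) - B (A x))"

text \<open>Defect operator C(V1,V2) = I - V1V1* - V2V2* + V1V2V1*V2*, given adjoints W1, W2.\<close>
definition defect_op :: "('a::sep_complex_hilbert \<Rightarrow> 'a) \<Rightarrow> ('a \<Rightarrow> 'a) \<Rightarrow> ('a \<Rightarrow> 'a) \<Rightarrow> ('a \<Rightarrow> 'a) \<Rightarrow> 'a \<Rightarrow> 'a" where
  "defect_op V1 V2 W1 W2 = (\<lambda>x. x - V1 (W1 x) - V2 (W2 x) + V1 (V2 (W1 (W2 x))))"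

definition orth_compl :: "'a::sep_complex_hilbert set \<Rightarrow> 'a set" where
  "orth_compl E = {y. \<forall>x\<in>E. cinner x y = 0}"

end

theory Submission
  imports Defs
begin

lemma ci_add_left: "cinner (x + y) z = cinner x z + cinner (y::'a::complex_hilbert) z"
  by (metis cinner_commute cinner_add_right complex_cnj_add)

lemma ci_zero_right[simp]: "cinner (x::'a::complex_hilbert) 0 = 0"
  using cinner_add_right[of x 0 0] by simp

lemma ci_zero_left[simp]: "cinner 0 (x::'a::complex_hilbert) = 0"
  by (metis ci_zero_right cinner_commute complex_cnj_zero)

lemma ci_minus_right: "cinner x (- y) = - cinner x (y::'a::complex_hilbert)"
proof -
  have "cinner x y + cinner x (-y) = 0" using cinner_add_right[of x y "-y"] by simp
  then show ?thesis by (metis neg_eq_iff_add_eq_0)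
qed

lemma ci_minus_left: "cinner (- x) y = - cinner x (y::'a::complex_hilbert)"
proof -
  have "cinner x y + cinner (-x) y = 0" using ci_add_left[of x "-x" y] by simp
  then show ?thesis by (metis neg_eq_iff_add_eq_0)
qed

lemma ci_diff_right: "cinner x (y - z) = cinner x y - cinner x (z::'a::complex_hilbert)"
  unfolding diff_conv_add_uminus by (simp only: cinner_add_right ci_minus_right)

lemma ci_diff_left: "cinner (x - y) z = cinner x z - cinner y (z::'a::complex_hilbert)"
  unfolding diff_conv_add_uminus by (simp only: ci_add_left ci_minus_left)

lemma ci_scaleR_right: "cinner x (r *\<^sub>R y) = of_real r * cinner x (y::'a::complex_hilbert)"
  by (subst scaleR_scaleC, rule cinner_scaleC_right)

lemma ci_scaleR_left: "cinner (r *\<^sub>R x) y = of_real r * cinner x (y::'a::complex_hilbert)"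
proof -
  have "cinner (r *\<^sub>R x) y = cnj (cinner y (r *\<^sub>R x))" by (rule cinner_commute)
  also have "\<dots> = of_real r * cnj (cinner y x)" by (simp add: ci_scaleR_right)
  also have "\<dots> = of_real r * cinner x y" by (metis cinner_commute)
  finally show ?thesis .
qed

lemma Re_ci_sym: "Re (cinner x y) = Re (cinner y (x::'a::complex_hilbert))"
  by (metis cinner_commute cnj.sel(1))

lemma norm_sq: "(norm x)^2 = Re (cinner x (x::'a::complex_hilbert))"
  by (simp add: norm_eq_sqrt_cinner cinner_pos)

lemma ci_self: "cinner x x = of_real ((norm x)^2)" for x::"'a::complex_hilbert"
proof -
  have "Im (cinner x x) = 0"
  proof -
    have "Im (cinner x x) = Im (cnj (cinner x x))" by (metis cinner_commute)
    then show ?thesis by simp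
  qed
  then show ?thesis using norm_sq[of x] by (simp add: complex_eq_iff)
qed

lemma ci_ext: "(\<And>z. cinner z x = cinner z y) \<Longrightarrow> x = (y::'a::complex_hilbert)"
proof -
  assume h: "\<And>z. cinner z x = cinner z y"
  have "cinner (x - y) (x - y) = 0" using h[of "x-y"] by (simp add: ci_diff_right)
  then show ?thesis by (simp add: cinner_eq_zero_iff)
qed

lemma Re_diff_sq: "Re (cinner (a - b) (a - b)) = Re (cinner a a) - 2 * Re (cinner a b) + Re (cinner b (b::'a::complex_hilbert))"
  using Re_ci_sym[of a b] by (simp add: ci_diff_left ci_diff_right)

lemma Re_add_sq: "Re (cinner (a + b) (a + b)) = Re (cinner a a) + 2 * Re (cinner a b) + Re (cinner b (b::'a::complex_hilbert))"
  using Re_ci_sym[of a b] by (simp add: ci_add_left cinner_add_right)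

lemma Re_ci_le: "Re (cinner a b) \<le> ((norm a)^2 + (norm b)^2) / 2" for a b :: "'a::complex_hilbert"
proof -
  have "0 \<le> Re (cinner (a - b) (a - b))" by (rule cinner_pos)
  then have "0 \<le> Re (cinner a a) - 2 * Re (cinner a b) + Re (cinner b b)" by (simp only: Re_diff_sq)
  then show ?thesis unfolding norm_sq by (simp add: field_simps)
qed


lemma adj_sym: "is_adjoint T S \<Longrightarrow> is_adjoint S T"
  unfolding is_adjoint_def by (metis cinner_commute)

lemma adj_unique: "is_adjoint T S \<Longrightarrow> is_adjoint T S' \<Longrightarrow> S = S'"
  unfolding is_adjoint_def by (metis ci_ext ext)

lemma adj_rev: "is_adjoint T S \<Longrightarrow> cinner z (S w) = cinner (T z) w"
  unfolding is_adjoint_def by simp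

lemma adj_add: "is_adjoint T S \<Longrightarrow> S (x + y) = S x + S y"
  by (intro ci_ext) (simp add: adj_rev cinner_add_right)

lemma adj_scaleR: "is_adjoint T S \<Longrightarrow> S (r *\<^sub>R x) = r *\<^sub>R S x"
  by (intro ci_ext) (simp add: adj_rev ci_scaleR_right)

lemma adj_diff: "is_adjoint T S \<Longrightarrow> S (x - y) = S x - S y"
  by (intro ci_ext) (simp add: adj_rev ci_diff_right)

lemma adj_zero: "is_adjoint T S \<Longrightarrow> S 0 = 0"
  using adj_diff[of T S 0 0] by simp

lemma adj_bounded_linear:
  assumes "is_adjoint T S" and "\<And>x. norm (S x) \<le> K * norm x"
  shows "bounded_linear S"
  by (rule bounded_linear_intro[of _ K]) (use assms adj_add adj_scaleR in \<open>auto simp: mult.commute\<close>)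

lemma adj_norm_sq: "is_adjoint T S \<Longrightarrow> cinner (S x) (S x) = cinner x (T (S x))"
  by (metis adj_sym is_adjoint_def)

lemma adj_contraction:
  assumes "is_adjoint V W" and iso: "\<And>x. norm (V x) = norm x"
  shows "norm (W y) \<le> norm y"
proof -
  have "(norm (W y))^2 = Re (cinner (V (W y)) y)"
    using assms(1) unfolding is_adjoint_def by (simp add: norm_sq)
  also have "\<dots> \<le> ((norm (V (W y)))^2 + (norm y)^2)/2" by (rule Re_ci_le)
  finally have "(norm (W y))^2 \<le> (norm y)^2" using iso[of "W y"] by simp
  then show ?thesis by (simp add: power2_le_iff_abs_le)
qed

lemma adj_left_inv:
  assumes "is_adjoint V W" and iso: "\<And>x. norm (V x) = norm x"
  shows "W (V x) = x"
proof -
  have c: "norm (W (V x)) \<le> norm x" using adj_contraction[OF assms, of "V x"] iso[of x] by simp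
  have i: "Re (cinner (W (V x)) x) = (norm x)^2"
    using assms(1) unfolding is_adjoint_def
    by (metis Re_ci_sym iso norm_sq)
  have "Re (cinner (W (V x) - x) (W (V x) - x)) = (norm (W (V x)))^2 - 2 * (norm x)^2 + (norm x)^2"
    by (simp only: Re_diff_sq i norm_sq)
  also have "\<dots> \<le> 0" using c by (simp add: power_mono)
  finally have "Re (cinner (W (V x) - x) (W (V x) - x)) = 0" using cinner_pos[of "W (V x) - x"] by linarith
  then have "(norm (W (V x) - x))^2 = 0" by (simp only: norm_sq)
  then show ?thesis by simp
qed


lemma parallelogram: "(norm (p - q))^2 + (norm (p + q))^2 = 2 * (norm p)^2 + 2 * (norm (q::'a::complex_hilbert))^2"
  by (simp only: norm_sq Re_diff_sq Re_add_sq)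

lemma var_ineq:
  fixes c N :: real
  assumes "N \<ge> 0" and h: "2 * (c / (N+1)) * c \<le> (c / (N+1))^2 * N"
  shows "c = 0"
proof -
  define t where "t = c / (N+1)"
  have p: "N + 1 > 0" using assms by simp
  have ct: "c = t * (N + 1)" unfolding t_def using p by simp
  have "2 * t * (t * (N+1)) \<le> t^2 * N" using h unfolding t_def[symmetric] ct[symmetric] .
  then have "t^2 * (N + 2) \<le> 0" by (simp add: algebra_simps power2_eq_square)
  moreover have "t^2 * (N + 2) \<ge> 0" using assms(1) by simp
  ultimately have "t^2 * (N + 2) = 0" by linarith
  then have "t = 0" using assms(1) by simp
  then show ?thesis using ct by simp
qed

lemma proj_exists:
  fixes M :: "'a::complex_hilbert set"
  assumes cl: "closed M" and z: "0 \<in> M"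
    and add: "\<And>a b. a \<in> M \<Longrightarrow> b \<in> M \<Longrightarrow> a + b \<in> M"
    and sc: "\<And>r a. a \<in> M \<Longrightarrow> r *\<^sub>R a \<in> M"
  shows "\<exists>m\<in>M. \<forall>v\<in>M. Re (cinner v (x - m)) = 0"
proof -
  define X where "X = (\<lambda>m. norm (x - m)) ` M"
  define d where "d = Inf X"
  have ne: "X \<noteq> {}" using z X_def by auto
  have bdd: "bdd_below X" unfolding X_def by (rule bdd_belowI[of _ 0]) auto
  have d_le: "\<And>m. m \<in> M \<Longrightarrow> d \<le> norm (x - m)"
    unfolding d_def X_def by (rule cInf_lower) (use bdd X_def in auto)
  have d0: "0 \<le> d" unfolding d_def by (rule cInf_greatest[OF ne]) (auto simp: X_def)
  have ex: "\<exists>m\<in>M. (norm (x - m))^2 < d^2 + inverse (real (Suc n))" for n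
  proof -
    define e where "e = sqrt (d^2 + inverse (real (Suc n)))"
    have "sqrt (d^2) < e" unfolding e_def by (subst real_sqrt_less_iff) simp
    then have "d < e" using d0 by simp
    then have "Inf X < e" by (simp add: d_def)
    then obtain y where "y \<in> X" "y < e" using cInf_less_iff[OF ne bdd] by auto
    then obtain m where m: "m \<in> M" "norm (x - m) < e" unfolding X_def by auto
    have "(norm (x - m))^2 < e^2" using m(2) by (simp add: power_strict_mono)
    also have "e^2 = d^2 + inverse (real (Suc n))" unfolding e_def
      by (simp add: add_nonneg_nonneg)
    finally show ?thesis using m(1) by blast
  qed
  then obtain f where f: "\<And>n. f n \<in> M" "\<And>n. (norm (x - f n))^2 < d^2 + inverse (real (Suc n))"
    by metis
  have key: "(norm (f n - f k))^2 \<le> 2 * inverse (real (Suc n)) + 2 * inverse (real (Suc k))" for n k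
  proof -
    define p where "p = x - f n"
    define q where "q = x - f k"
    have mid: "(1/2) *\<^sub>R (f n + f k) \<in> M" using add f(1) sc by blast
    have pq: "p + q = 2 *\<^sub>R (x - (1/2) *\<^sub>R (f n + f k))" unfolding p_def q_def
      by (simp add: algebra_simps scaleR_add_right scaleR_2)
    have "(norm (p + q))^2 = 4 * (norm (x - (1/2) *\<^sub>R (f n + f k)))^2"
      unfolding pq by (simp add: power_mult_distrib)
    moreover have "d^2 \<le> (norm (x - (1/2) *\<^sub>R (f n + f k)))^2"
      using d_le[OF mid] d0 by (simp add: power_mono)
    ultimately have "4 * d^2 \<le> (norm (p + q))^2" by simp
    moreover have "(norm (p - q))^2 = (norm (f n - f k))^2" unfolding p_def q_def
      by (metis norm_minus_commute diff_diff_eq2 add_diff_cancel_left' diff_add_cancel add_diff_eq diff_diff_add)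
    moreover have "(norm p)^2 < d^2 + inverse (real (Suc n))" unfolding p_def by (rule f(2))
    moreover have "(norm q)^2 < d^2 + inverse (real (Suc k))" unfolding q_def by (rule f(2))
    ultimately show ?thesis using parallelogram[of p q] by linarith
  qed
  have "Cauchy f"
  proof (rule metric_CauchyI)
    fix e :: real assume e: "0 < e"
    obtain N where N: "N > 0" "inverse (real N) < e^2 / 4"
      using ex_inverse_of_nat_less[of "e^2/4"] e by auto
    show "\<exists>M. \<forall>m\<ge>M. \<forall>n\<ge>M. dist (f m) (f n) < e"
    proof (intro exI allI impI)
      fix m n assume mn: "N \<le> m" "N \<le> n"
      have a: "inverse (real (Suc m)) \<le> inverse (real N)"
        using mn N by (simp add: le_imp_inverse_le)
      have b: "inverse (real (Suc n)) \<le> inverse (real N)"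
        using mn N by (simp add: le_imp_inverse_le)
      have "(norm (f m - f n))^2 < e^2" using key[of m n] a b N by linarith
      then have "norm (f m - f n) < e" using e
        by (metis abs_norm_cancel abs_of_pos power2_less_imp_less less_le_not_le)
      then show "dist (f m) (f n) < e" by (simp add: dist_norm)
    qed
  qed
  then obtain m where lim: "f \<longlonglongrightarrow> m" using Cauchy_convergent_iff convergent_def by blast
  have mM: "m \<in> M" using closed_sequentially[OF cl] f(1) lim by blast
  have l1: "(\<lambda>n. (norm (x - f n))^2) \<longlonglongrightarrow> (norm (x - m))^2"
    by (intro tendsto_intros lim)
  have l2: "(\<lambda>n. d^2 + inverse (real (Suc n))) \<longlonglongrightarrow> d^2 + 0"
    by (intro tendsto_add tendsto_const LIMSEQ_inverse_real_of_nat)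
  have "(norm (x - m))^2 \<le> d^2 + 0"
    by (rule LIMSEQ_le[OF l1 l2]) (use f(2) less_imp_le in blast)
  then have minp: "(norm (x - m))^2 \<le> (norm (x - m'))^2" if "m' \<in> M" for m'
    using d_le[OF that] d0 by (smt (verit) power_mono)
  show ?thesis
  proof (intro bexI[OF _ mM] ballI)
    fix v assume v: "v \<in> M"
    define u where "u = x - m"
    define c where "c = Re (cinner v u)"
    define N where "N = (norm v)^2"
    define s where "s = c / (N + 1)"
    have "m + s *\<^sub>R v \<in> M" using add sc v mM by blast
    from minp[OF this] have "(norm u)^2 \<le> (norm (u - s *\<^sub>R v))^2"
      unfolding u_def by (simp add: algebra_simps)
    also have "(norm (u - s *\<^sub>R v))^2 = (norm u)^2 - 2 * s * c + s^2 * N"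
      unfolding norm_sq Re_diff_sq N_def c_def
      by (simp add: ci_scaleR_left ci_scaleR_right power2_eq_square Re_ci_sym[of u v])
    finally have "2 * s * c \<le> s^2 * N" by simp
    then have "c = 0" using var_ineq[of N c] unfolding s_def N_def by simp
    then show "Re (cinner v (x - m)) = 0" unfolding c_def u_def .
  qed
qed


lemma normal_range:
  fixes T S :: "'a::sep_complex_hilbert \<Rightarrow> 'a"
  assumes adj: "is_adjoint T S" and comm: "T \<circ> S = S \<circ> T"
    and bT: "\<And>x. norm (T x) \<le> K * norm x" and bS: "\<And>x. norm (S x) \<le> K * norm x"
  shows "range T \<subseteq> range S"
proof -
  have adj': "is_adjoint S T" by (rule adj_sym[OF adj])
  have lT: "bounded_linear T" by (rule adj_bounded_linear[OF adj' bT])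
  have lS: "bounded_linear S" by (rule adj_bounded_linear[OF adj bS])
  have TS: "T (S z) = S (T z)" for z using comm by (metis comp_apply)
  have neq: "norm (T z) = norm (S z)" for z
  proof -
    have "cinner (T z) (T z) = cinner z (S (T z))" by (rule adj_norm_sq[OF adj'])
    also have "\<dots> = cinner (S z) (S z)" using adj_norm_sq[OF adj, of z] TS[of z] by simp
    finally show ?thesis by (simp add: norm_eq_sqrt_cinner)
  qed
  have dist_eq: "dist (T a) (T b) = dist (S a) (S b)" for a b
  proof -
    have "dist (T a) (T b) = norm (T (a - b))" by (simp add: dist_norm adj_diff[OF adj'])
    also have "\<dots> = norm (S (a - b))" by (rule neq)
    also have "\<dots> = dist (S a) (S b)" by (simp add: dist_norm adj_diff[OF adj])
    finally show ?thesis .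
  qed
  have seq: "\<exists>z. (\<lambda>n. S (z n)) \<longlonglongrightarrow> m" if "m \<in> closure (range S)" for m
  proof -
    from that obtain y where y: "\<forall>n. y n \<in> range S" "y \<longlonglongrightarrow> m"
      unfolding closure_sequential by blast
    from y(1) have "\<forall>n. \<exists>w. y n = S w" by (auto simp: image_iff)
    then obtain z where "\<forall>n. y n = S (z n)" by (auto dest!: choice)
    then have "(\<lambda>n. S (z n)) = y" by auto
    then show ?thesis using y(2) by auto
  qed
  have clos: "T m \<in> range S" if mc: "m \<in> closure (range S)" for m
  proof -
    obtain z where z: "(\<lambda>n. S (z n)) \<longlonglongrightarrow> m" using seq[OF mc] by blast
    have "Cauchy (\<lambda>n. S (z n))" using z by (rule LIMSEQ_imp_Cauchy)
    then have "Cauchy (\<lambda>n. T (z n))" unfolding Cauchy_def dist_eq .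
    then obtain w where w: "(\<lambda>n. T (z n)) \<longlonglongrightarrow> w" using Cauchy_convergent_iff convergent_def by blast
    have "(\<lambda>n. S (T (z n))) \<longlonglongrightarrow> S w" by (rule bounded_linear.tendsto[OF lS w])
    moreover have "(\<lambda>n. T (S (z n))) \<longlonglongrightarrow> T m" by (rule bounded_linear.tendsto[OF lT z])
    ultimately have "T m = S w" using TS LIMSEQ_unique by simp
    then show ?thesis by simp
  qed
  let ?M = "closure (range S)"
  have "S 0 \<in> range S" by (rule rangeI)
  then have "S 0 \<in> ?M" by (rule subsetD[OF closure_subset])
  then have M0: "0 \<in> ?M" by (simp only: adj_zero[OF adj])
  have Madd: "a + b \<in> ?M" if mc: "a \<in> ?M" "b \<in> ?M" for a b
  proof -
    obtain z where z: "(\<lambda>n. S (z n)) \<longlonglongrightarrow> a" using seq[OF mc(1)] by blast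
    obtain z' where z': "(\<lambda>n. S (z' n)) \<longlonglongrightarrow> b" using seq[OF mc(2)] by blast
    have "(\<lambda>n. S (z n + z' n)) \<longlonglongrightarrow> a + b"
      using tendsto_add[OF z z'] by (simp add: adj_add[OF adj])
    then show ?thesis unfolding closure_sequential by (intro exI[of _ "\<lambda>n. S (z n + z' n)"]) auto
  qed
  have Msc: "r *\<^sub>R a \<in> ?M" if mc: "a \<in> ?M" for a r
  proof -
    obtain z where z: "(\<lambda>n. S (z n)) \<longlonglongrightarrow> a" using seq[OF mc(1)] by blast
    have "(\<lambda>n. S (r *\<^sub>R z n)) \<longlonglongrightarrow> r *\<^sub>R a"
      using tendsto_scaleR[OF tendsto_const z] by (simp add: adj_scaleR[OF adj])
    then show ?thesis unfolding closure_sequential by (intro exI[of _ "\<lambda>n. S (r *\<^sub>R z n)"]) auto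
  qed
  show ?thesis
  proof
    fix y assume "y \<in> range T"
    then obtain x where yx: "y = T x" by auto
    obtain m where m: "m \<in> ?M" "\<forall>v\<in>?M. Re (cinner v (x - m)) = 0"
      using proj_exists[OF closed_closure M0 Madd Msc, of x] by blast
    have "S (T (x - m)) \<in> range S" by (rule rangeI)
    then have "S (T (x - m)) \<in> ?M" by (rule subsetD[OF closure_subset])
    then have "Re (cinner (S (T (x - m))) (x - m)) = 0" using m(2) by simp
    then have "Re (cinner (T (x - m)) (T (x - m))) = 0" using adj' unfolding is_adjoint_def by simp
    then have "(norm (T (x - m)))^2 = 0" by (simp only: norm_sq)
    then have "T (x - m) = 0" by simp
    then have "T x = T m" by (simp add: adj_diff[OF adj'])
    then show "y \<in> range S" using clos[OF m(1)] yx by simp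
  qed
qed


theorem lemma4p2:
  fixes V1 V2 W1 W2 :: "'a::sep_complex_hilbert \<Rightarrow> 'a"
  assumes "BCL_pair V1 V2"
    and "is_adjoint V1 W1" and "is_adjoint V2 W2"
    and "normal_op (commutator W2 V1)"
  shows "range (commutator W2 V1) = range (commutator W1 V2)
       \<and> range (commutator W2 V1) \<subseteq> {x. defect_op V1 V2 W1 W2 x = x}
       \<and> (\<forall>x\<in>orth_compl {x. defect_op V1 V2 W1 W2 x = x}.
             commutator W2 V1 x = 0 \<and> commutator W1 V2 x = 0)"
proof -
  define A where "A = commutator W2 V1"
  define B where "B = commutator W1 V2"
  define E1 where "E1 = {x. defect_op V1 V2 W1 W2 x = x}"
  have a1: "is_adjoint V1 W1" and a2: "is_adjoint V2 W2" using assms by auto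
  have s1: "is_adjoint W1 V1" and s2: "is_adjoint W2 V2" using a1 a2 by (auto intro: adj_sym)
  have ip: "isometric_pair V1 V2" using assms(1) unfolding BCL_pair_def by simp
  have iso1: "\<And>x. norm (V1 x) = norm x" and iso2: "\<And>x. norm (V2 x) = norm x"
    using ip unfolding isometric_pair_def isometry_def by auto
  have vc: "V1 (V2 x) = V2 (V1 x)" for x
    using ip unfolding isometric_pair_def by (metis comp_apply)
  have l1: "W1 (V1 x) = x" for x by (rule adj_left_inv[OF a1 iso1])
  have l2: "W2 (V2 x) = x" for x by (rule adj_left_inv[OF a2 iso2])
  have c1: "norm (W1 x) \<le> norm x" for x by (rule adj_contraction[OF a1 iso1])
  have c2: "norm (W2 x) \<le> norm x" for x by (rule adj_contraction[OF a2 iso2])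
  have r1: "cinner (V1 x) y = cinner x (W1 y)" for x y using a1 unfolding is_adjoint_def by simp
  have r2: "cinner (W2 x) y = cinner x (V2 y)" for x y using s2 unfolding is_adjoint_def by simp
  have adjAB: "is_adjoint A B"
    unfolding is_adjoint_def A_def B_def commutator_def
    by (simp add: ci_diff_left ci_diff_right r1 r2)
  have adjBA: "is_adjoint B A" by (rule adj_sym[OF adjAB])
  obtain S where S: "is_adjoint A S" "A \<circ> S = S \<circ> A"
    using assms(4) unfolding normal_op_def A_def by blast
  have "S = B" by (rule adj_unique[OF S(1) adjAB])
  then have commAB: "A \<circ> B = B \<circ> A" using S(2) by simp
  have bA: "norm (A x) \<le> 2 * norm x" for x
  proof -
    have "norm (A x) \<le> norm (W2 (V1 x)) + norm (V1 (W2 x))"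
      unfolding A_def commutator_def by (rule norm_triangle_ineq4)
    also have "\<dots> \<le> norm x + norm x" using c2[of "V1 x"] iso1[of "W2 x"] iso1[of x] c2[of x] by simp
    finally show ?thesis by simp
  qed
  have bB: "norm (B x) \<le> 2 * norm x" for x
  proof -
    have "norm (B x) \<le> norm (W1 (V2 x)) + norm (V2 (W1 x))"
      unfolding B_def commutator_def by (rule norm_triangle_ineq4)
    also have "\<dots> \<le> norm x + norm x" using c1[of "V2 x"] iso2[of "W1 x"] iso2[of x] c1[of x] by simp
    finally show ?thesis by simp
  qed
  have rAB: "range A = range B"
  proof
    show "range A \<subseteq> range B" by (rule normal_range[OF adjAB commAB bA bB])
    show "range B \<subseteq> range A" by (rule normal_range[OF adjBA commAB[symmetric] bB bA])
  qed
  have ABeq: "cinner (A z) (A z) = cinner (B z) (B z)" for z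
  proof -
    have "cinner (A z) (A z) = cinner z (B (A z))" by (rule adj_norm_sq[OF adjBA])
    also have "\<dots> = cinner z (A (B z))" using commAB by (metis comp_apply)
    also have "\<dots> = cinner (B z) (B z)" by (rule adj_norm_sq[OF adjAB, symmetric])
    finally show ?thesis .
  qed
  have AV2: "A (V2 x) = 0" for x
    unfolding A_def commutator_def by (simp add: vc l2)
  have BV1: "B (V1 x) = 0" for x
    unfolding B_def commutator_def by (simp add: vc[symmetric] l1)
  have BV2: "B (V2 x) = 0" for x
  proof -
    have "cinner (B (V2 x)) (B (V2 x)) = 0" using ABeq[of "V2 x"] AV2[of x] by simp
    then show ?thesis by (simp add: cinner_eq_zero_iff)
  qed
  have ranE: "range A \<subseteq> E1"
  proof
    fix y assume "y \<in> range A"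
    then obtain x where yx: "y = A x" by auto
    have w1: "W1 y = 0"
    proof (rule ci_ext)
      fix z
      have "cinner z (W1 y) = cinner (V1 z) (A x)" unfolding yx by (rule adj_rev[OF a1])
      also have "\<dots> = cinner (B (V1 z)) x" by (rule adj_rev[OF adjBA])
      finally show "cinner z (W1 y) = cinner z 0" by (simp add: BV1)
    qed
    have w2: "W2 y = 0"
    proof (rule ci_ext)
      fix z
      have "cinner z (W2 y) = cinner (V2 z) (A x)" unfolding yx by (rule adj_rev[OF a2])
      also have "\<dots> = cinner (B (V2 z)) x" by (rule adj_rev[OF adjBA])
      finally show "cinner z (W2 y) = cinner z 0" by (simp add: BV2)
    qed
    show "y \<in> E1" unfolding E1_def defect_op_def
      by (simp add: w1 w2 adj_zero[OF a1] adj_zero[OF s1] adj_zero[OF s2])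
  qed
  have orth: "A x = 0 \<and> B x = 0" if x: "x \<in> orth_compl E1" for x
  proof
    have "B (A x) \<in> E1" using rAB ranE by blast
    then have "cinner (B (A x)) x = 0" using x unfolding orth_compl_def by blast
    then have "cinner x (B (A x)) = 0" by (metis cinner_commute complex_cnj_zero)
    then have "cinner (A x) (A x) = 0" using adjAB unfolding is_adjoint_def by simp
    then show "A x = 0" by (simp add: cinner_eq_zero_iff)
    have "A (B x) \<in> E1" using ranE by blast
    then have "cinner (A (B x)) x = 0" using x unfolding orth_compl_def by blast
    then have "cinner x (A (B x)) = 0" by (metis cinner_commute complex_cnj_zero)
    then have "cinner (B x) (B x) = 0" using adjBA unfolding is_adjoint_def by simp
    then show "B x = 0" by (simp add: cinner_eq_zero_iff)
  qed
  show ?thesis using rAB ranE orth unfolding A_def B_def E1_def by blast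
qed

end
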